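(* Let $M$ be a finite-dimensional left $\mathsf{VBr}_{r,t}(\omega)$-module, $\mathbf a\in\mathrm{Seq}_{r,t}$, $\mathbf i\in\mathbb C^{r+t}$ and $k\in\{1,\dots,r+t-1\}$. Suppose that either (a) $a_k=a_{k+1}$, $\mathrm i_{k+1}\notin\{\mathrm i_k,\mathrm i_k+1,\mathrm i_k-1\}$ and $(y_k-\mathrm i_{k+1})1_{\mathbf a}M_{\mathsf s_k\mathbf i}=0$; or (b) $a_k\ne a_{k+1}$, $\mathrm i_k+\mathrm i_{k+1}\ne0$ and $(y_k-\mathrm i_{k+1})1_{\mathsf s_k\mathbf a}M_{\mathsf s_k\mathbf i}=0$. Then $(y_{k+1}-\mathrm i_{k+1})1_{\mathbf a}M_{\mathbf i}=0$.
   Context: $\mathrm{Seq}_{r,t}$: sequences $\mathbf a\in\{\wedge,\vee\}^{r+t}$ with exactly $r$ entries $\wedge$; $J=\{1,\dots,r+t-1\}$; $\mathsf s_k$ swaps entries $k,k+1$ (of sequences and of vectors in $\mathbb C^{r+t}$). $\mathrm{Br}_{r,t}(\gamma)$: basis oriented Brauer diagrams $\mathbf a\to\mathbf b$ (perfect matchings between bottom row labelled $\mathbf a$ and top row labelled $\mathbf b$; bottom-to-top strands join equal labels, strands within a row join different labels), product by stacking (second factor below), $0$ if labels mismatch, loops replaced by $\gamma$. $1_{\mathbf a}$ identity; for $k\in J$: if $a_k=a_{k+1}$, $s_k1_{\mathbf a}$ crosses strands $k,k+1$ ($\mathbf a\to\mathbf a$); if $a_k\neq a_{k+1}$, $\hat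 s_k1_{\mathbf a}$ crossing $\mathbf a\to\mathsf s_k\mathbf a$, $e_k1_{\mathbf a}$ cap at bottom $k,k+1$ and cup at top $k,k+1$ ($\mathbf a\to\mathbf a$), $\hat e_k1_{\mathbf a}$ same shape $\mathbf a\to\mathsf s_k\mathbf a$; these are $0$ when the condition fails; $s_k=\sum_{\mathbf a}s_k1_{\mathbf a}$ etc. For $\omega=(\omega_j)_{j\ge0}\subset\mathbb C$, $\mathsf{VBr}_{r,t}(\omega)$ is the quotient of the free product $\mathrm{Br}_{r,t}(\omega_0)*\mathbb C[y_1,\dots,y_{r+t}]$ by: $y_i$ commutes with all $1_{\mathbf a}$, and with $s_k,\hat s_k,e_k,\hat e_k$ when $i\notin\{k,k+1\}$; $e_1y_1^je_11_{\mathbf a}=\omega_je_11_{\mathbf a}$ for $j\ge0$ and $(a_1,a_2)=(\wedge,\vee)$; for $a_k=a_{k+1}$: $s_ky_k1_{\mathbf a}-y_{k+1}s_k1_{\mathbf a}=-1_{\mathbf a}$, $s_ky_{k+1}1_{\mathbf a}-y_ks_k1_{\mathbf a}=1_{\mathbf a}$; $\hat s_ky_k-y_{k+1}\hat s_k=\hat e_k$, $\hat s_ky_{k+1}-y_k\hat s_k=-\hat e_k$; $e_k,\hat e_k$ are annihilated on both sides by $y_k+y_{k+1}$. $1_{\mathbf a}M_{\mathbf i}=\{v\in1_{\mathbf a}M:(y_k-\mathrm i_k)^Nv=0\ \forall k,\ N\gg0\}$ (generalized simultaneous eigenspace). *)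

theory Defs
  imports Complex_Main
begin

(* Conventions: True encodes \<wedge>, False encodes \<vee>.
   Positions are 1-based as in the paper: entry k of a sequence a is a ! (k - 1),
   entry k of a vector i \<in> C^(r+t) is i k (for i :: nat \<Rightarrow> complex, only 1..r+t matter). *)

definition Seq :: "nat \<Rightarrow> nat \<Rightarrow> bool list set" where
  "Seq r t = {a. length a = r + t \<and> length (filter id a) = r}"

definition ent :: "bool list \<Rightarrow> nat \<Rightarrow> bool" where
  "ent a k = a ! (k - 1)"

definition swp :: "nat \<Rightarrow> bool list \<Rightarrow> bool list" where
  "swp k a = a[k - 1 := a ! k, k := a ! (k - 1)]"

definition swpv :: "nat \<Rightarrow> (nat \<Rightarrow> complex) \<Rightarrow> (nat \<Rightarrow> complex)" where
  "swpv k i = i(k := i (k + 1), k + 1 := i k)"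

datatype pt = Bt nat | Tp nat

fun inr :: "nat \<Rightarrow> pt \<Rightarrow> bool" where
  "inr n (Bt i) = (1 \<le> i \<and> i \<le> n)"
| "inr n (Tp i) = (1 \<le> i \<and> i \<le> n)"

fun same_row :: "pt \<Rightarrow> pt \<Rightarrow> bool" where
  "same_row (Bt _) (Bt _) = True"
| "same_row (Tp _) (Tp _) = True"
| "same_row _ _ = False"

fun lbl :: "bool list \<Rightarrow> bool list \<Rightarrow> pt \<Rightarrow> bool" where
  "lbl a b (Bt i) = ent a i"
| "lbl a b (Tp i) = ent b i"

(* a diagram a \<rightarrow> b: (bottom labels a, top labels b, perfect matching m given as a
   fixed-point-free involution on the 2n points, identity outside them) *)
type_synonym diag = "bool list \<times> bool list \<times> (pt \<Rightarrow> pt)"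

fun dsrc :: "diag \<Rightarrow> bool list" where "dsrc (a, b, m) = a"
fun dtgt :: "diag \<Rightarrow> bool list" where "dtgt (a, b, m) = b"

definition Br :: "nat \<Rightarrow> nat \<Rightarrow> diag set" where
  "Br r t = {(a, b, m). a \<in> Seq r t \<and> b \<in> Seq r t \<and>
     (\<forall>p. inr (r + t) p \<longrightarrow>
          inr (r + t) (m p) \<and> m p \<noteq> p \<and> m (m p) = p \<and>
          (if same_row p (m p) then lbl a b p \<noteq> lbl a b (m p)
           else lbl a b p = lbl a b (m p))) \<and>
     (\<forall>p. \<not> inr (r + t) p \<longrightarrow> m p = p)}"

(* stacking: d1 on top of d2 (product d1 d2, second factor below) *)
datatype lv = L0 nat | L1 nat | L2 nat

fun embLow :: "pt \<Rightarrow> lv" where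
  "embLow (Bt i) = L0 i" | "embLow (Tp i) = L1 i"
fun embUp :: "pt \<Rightarrow> lv" where
  "embUp (Bt i) = L1 i" | "embUp (Tp i) = L2 i"
fun embOut :: "pt \<Rightarrow> lv" where
  "embOut (Bt i) = L0 i" | "embOut (Tp i) = L2 i"

definition stack_edges :: "nat \<Rightarrow> (pt \<Rightarrow> pt) \<Rightarrow> (pt \<Rightarrow> pt) \<Rightarrow> (lv \<times> lv) set" where
  "stack_edges n m1 m2 =
     {(embLow p, embLow (m2 p)) | p. inr n p} \<union> {(embUp p, embUp (m1 p)) | p. inr n p}"

definition comp_match :: "nat \<Rightarrow> (pt \<Rightarrow> pt) \<Rightarrow> (pt \<Rightarrow> pt) \<Rightarrow> pt \<Rightarrow> pt" where
  "comp_match n m1 m2 p =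
     (if inr n p then (THE q. inr n q \<and> q \<noteq> p \<and>
                         (embOut p, embOut q) \<in> (stack_edges n m1 m2)\<^sup>*)
      else p)"

(* number of closed loops created in the middle row *)
definition nloops :: "nat \<Rightarrow> (pt \<Rightarrow> pt) \<Rightarrow> (pt \<Rightarrow> pt) \<Rightarrow> nat" where
  "nloops n m1 m2 =
     (let R = (stack_edges n m1 m2)\<^sup>*;
          F = {L1 i | i. 1 \<le> i \<and> i \<le> n \<and> \<not> (\<exists>p. inr n p \<and> (L1 i, embOut p) \<in> R)}
      in card ((\<lambda>x. R `` {x}) ` F))"

fun dcomp :: "diag \<Rightarrow> diag \<Rightarrow> diag" where
  "dcomp (a1, b1, m1) (a2, b2, m2) = (a2, b1, comp_match (length a2) m1 m2)"

fun dloops :: "diag \<Rightarrow> diag \<Rightarrow> nat" where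
  "dloops (a1, b1, m1) (a2, b2, m2) = nloops (length a2) m1 m2"

fun flip :: "pt \<Rightarrow> pt" where "flip (Bt i) = Tp i" | "flip (Tp i) = Bt i"

definition idm :: "nat \<Rightarrow> pt \<Rightarrow> pt" where
  "idm n p = (if inr n p then flip p else p)"

definition crossm :: "nat \<Rightarrow> nat \<Rightarrow> pt \<Rightarrow> pt" where
  "crossm n k p =
     (if p = Bt k then Tp (k + 1) else if p = Bt (k + 1) then Tp k
      else if p = Tp k then Bt (k + 1) else if p = Tp (k + 1) then Bt k
      else idm n p)"

definition capm :: "nat \<Rightarrow> nat \<Rightarrow> pt \<Rightarrow> pt" where
  "capm n k p =
     (if p = Bt k then Bt (k + 1) else if p = Bt (k + 1) then Bt k
      else if p = Tp k then Tp (k + 1) else if p = Tp (k + 1) then Tp k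
      else idm n p)"

definition d_one :: "bool list \<Rightarrow> diag" where
  "d_one a = (a, a, idm (length a))"
definition d_s :: "nat \<Rightarrow> bool list \<Rightarrow> diag" where      (* s_k 1_a, a_k = a_{k+1} *)
  "d_s k a = (a, a, crossm (length a) k)"
definition d_shat :: "nat \<Rightarrow> bool list \<Rightarrow> diag" where   (* \<hat>s_k 1_a, a_k \<noteq> a_{k+1} *)
  "d_shat k a = (a, swp k a, crossm (length a) k)"
definition d_e :: "nat \<Rightarrow> bool list \<Rightarrow> diag" where      (* e_k 1_a, a_k \<noteq> a_{k+1} *)
  "d_e k a = (a, a, capm (length a) k)"
definition d_ehat :: "nat \<Rightarrow> bool list \<Rightarrow> diag" where   (* \<hat>e_k 1_a, a_k \<noteq> a_{k+1} *)
  "d_ehat k a = (a, swp k a, capm (length a) k)"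

definition opS :: "nat \<Rightarrow> nat \<Rightarrow> (diag \<Rightarrow> 'v \<Rightarrow> 'v::ab_group_add) \<Rightarrow> nat \<Rightarrow> 'v \<Rightarrow> 'v" where
  "opS r t act k v = (\<Sum>b\<in>{b\<in>Seq r t. ent b k = ent b (k + 1)}. act (d_s k b) v)"
definition opShat :: "nat \<Rightarrow> nat \<Rightarrow> (diag \<Rightarrow> 'v \<Rightarrow> 'v::ab_group_add) \<Rightarrow> nat \<Rightarrow> 'v \<Rightarrow> 'v" where
  "opShat r t act k v = (\<Sum>b\<in>{b\<in>Seq r t. ent b k \<noteq> ent b (k + 1)}. act (d_shat k b) v)"
definition opE :: "nat \<Rightarrow> nat \<Rightarrow> (diag \<Rightarrow> 'v \<Rightarrow> 'v::ab_group_add) \<Rightarrow> nat \<Rightarrow> 'v \<Rightarrow> 'v" where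
  "opE r t act k v = (\<Sum>b\<in>{b\<in>Seq r t. ent b k \<noteq> ent b (k + 1)}. act (d_e k b) v)"
definition opEhat :: "nat \<Rightarrow> nat \<Rightarrow> (diag \<Rightarrow> 'v \<Rightarrow> 'v::ab_group_add) \<Rightarrow> nat \<Rightarrow> 'v \<Rightarrow> 'v" where
  "opEhat r t act k v = (\<Sum>b\<in>{b\<in>Seq r t. ent b k \<noteq> ent b (k + 1)}. act (d_ehat k b) v)"

(* ---------- finite-dimensional left VBr_{r,t}(\<omega>)-modules ----------
   A module is a finite-dimensional complex vector space ('v, scl) with
   act d = action of the basis diagram d \<in> Br_{r,t}(\<omega>_0) (extended linearly, this is a
   unital algebra homomorphism Br \<rightarrow> End) and Y i = action of y_i, 1 \<le> i \<le> r+t,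
   subject to the defining relations of VBr. *)
definition VBr_module ::
  "nat \<Rightarrow> nat \<Rightarrow> (nat \<Rightarrow> complex) \<Rightarrow> (complex \<Rightarrow> 'v \<Rightarrow> 'v::ab_group_add) \<Rightarrow>
   (diag \<Rightarrow> 'v \<Rightarrow> 'v) \<Rightarrow> (nat \<Rightarrow> 'v \<Rightarrow> 'v) \<Rightarrow> bool" where
  "VBr_module r t \<omega> scl act Y \<longleftrightarrow>
     (let n = r + t; J = {1..<n}; SQ = Seq r t;
          S = opS r t act; Sh = opShat r t act; E = opE r t act; Eh = opEhat r t act in
     vector_space scl \<and> (\<exists>B. finite_dimensional_vector_space scl B) \<and>
     (\<forall>d\<in>Br r t. Vector_Spaces.linear scl scl (act d)) \<and>
     (\<forall>i\<in>{1..n}. Vector_Spaces.linear scl scl (Y i)) \<and>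
     \<comment> \<open>Br_{r,t}(\<omega>_0)-module: multiplicativity on basis diagrams and unit\<close>
     (\<forall>d1\<in>Br r t. \<forall>d2\<in>Br r t. \<forall>v.
        act d1 (act d2 v) =
          (if dtgt d2 = dsrc d1 then scl ((\<omega> 0) ^ dloops d1 d2) (act (dcomp d1 d2) v) else 0)) \<and>
     (\<forall>v. (\<Sum>a\<in>SQ. act (d_one a) v) = v) \<and>
     \<comment> \<open>C[y_1,...,y_n]-module\<close>
     (\<forall>i\<in>{1..n}. \<forall>j\<in>{1..n}. \<forall>v. Y i (Y j v) = Y j (Y i v)) \<and>
     \<comment> \<open>y_i commutes with all 1_a\<close>
     (\<forall>i\<in>{1..n}. \<forall>a\<in>SQ. \<forall>v. Y i (act (d_one a) v) = act (d_one a) (Y i v)) \<and>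
     \<comment> \<open>y_i commutes with s_k, \<hat>s_k, e_k, \<hat>e_k for i \<notin> {k,k+1}\<close>
     (\<forall>i\<in>{1..n}. \<forall>k\<in>J. i \<notin> {k, k + 1} \<longrightarrow> (\<forall>v.
        Y i (S k v) = S k (Y i v) \<and> Y i (Sh k v) = Sh k (Y i v) \<and>
        Y i (E k v) = E k (Y i v) \<and> Y i (Eh k v) = Eh k (Y i v))) \<and>
     \<comment> \<open>e_1 y_1^j e_1 1_a = \<omega>_j e_1 1_a for (a_1,a_2) = (\<wedge>,\<vee>)\<close>
     (\<forall>j. \<forall>a\<in>SQ. n \<ge> 2 \<and> ent a 1 = True \<and> ent a 2 = False \<longrightarrow> (\<forall>v.
        E 1 ((Y 1 ^^ j) (E 1 (act (d_one a) v))) = scl (\<omega> j) (E 1 (act (d_one a) v)))) \<and>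
     \<comment> \<open>relations for a_k = a_{k+1}\<close>
     (\<forall>k\<in>J. \<forall>a\<in>SQ. ent a k = ent a (k + 1) \<longrightarrow> (\<forall>v.
        S k (Y k (act (d_one a) v)) - Y (k + 1) (S k (act (d_one a) v)) = - act (d_one a) v \<and>
        S k (Y (k + 1) (act (d_one a) v)) - Y k (S k (act (d_one a) v)) = act (d_one a) v)) \<and>
     \<comment> \<open>relations for \<hat>s_k\<close>
     (\<forall>k\<in>J. \<forall>v.
        Sh k (Y k v) - Y (k + 1) (Sh k v) = Eh k v \<and>
        Sh k (Y (k + 1) v) - Y k (Sh k v) = - Eh k v) \<and>
     \<comment> \<open>e_k, \<hat>e_k annihilated on both sides by y_k + y_{k+1}\<close>
     (\<forall>k\<in>J. \<forall>v.
        E k (Y k v + Y (k + 1) v) = 0 \<and> Y k (E k v) + Y (k + 1) (E k v) = 0 \<and>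
        Eh k (Y k v + Y (k + 1) v) = 0 \<and> Y k (Eh k v) + Y (k + 1) (Eh k v) = 0))"

definition gen_eig ::
  "nat \<Rightarrow> (complex \<Rightarrow> 'v \<Rightarrow> 'v::ab_group_add) \<Rightarrow> (diag \<Rightarrow> 'v \<Rightarrow> 'v) \<Rightarrow> (nat \<Rightarrow> 'v \<Rightarrow> 'v) \<Rightarrow>
   bool list \<Rightarrow> (nat \<Rightarrow> complex) \<Rightarrow> 'v set" where
  "gen_eig n scl act Y a i =
     {v. v \<in> range (act (d_one a)) \<and>
         (\<exists>N. \<forall>k\<in>{1..n}. ((\<lambda>w. Y k w - scl (i k) w) ^^ N) v = 0)}"

end

theory Submission
  imports Defs "HOL-Library.Multiset"
begin


definition perm_m :: "nat \<Rightarrow> (nat \<Rightarrow> nat) \<Rightarrow> pt \<Rightarrow> pt" where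
  "perm_m n \<sigma> p = (if inr n p then (case p of Bt i \<Rightarrow> Tp (\<sigma> i) | Tp j \<Rightarrow> Bt (\<sigma> j)) else p)"

definition invo :: "nat \<Rightarrow> (nat \<Rightarrow> nat) \<Rightarrow> bool" where
  "invo n \<sigma> \<longleftrightarrow> (\<forall>j. \<sigma> (\<sigma> j) = j) \<and> (\<forall>j. 1 \<le> j \<and> j \<le> n \<longrightarrow> 1 \<le> \<sigma> j \<and> \<sigma> j \<le> n)"

fun good :: "nat \<Rightarrow> lv \<Rightarrow> bool" where
  "good n (L0 i) = (1 \<le> i \<and> i \<le> n)"
| "good n (L1 i) = (1 \<le> i \<and> i \<le> n)"
| "good n (L2 i) = (1 \<le> i \<and> i \<le> n)"

fun cls :: "(nat \<Rightarrow> nat) \<Rightarrow> (nat \<Rightarrow> nat) \<Rightarrow> lv \<Rightarrow> nat" where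
  "cls \<sigma> \<tau> (L0 i) = i"
| "cls \<sigma> \<tau> (L1 j) = \<sigma> j"
| "cls \<sigma> \<tau> (L2 l) = \<sigma> (\<tau> l)"

lemma edge_inv:
  assumes s: "invo n \<sigma>" and t: "invo n \<tau>"
    and e: "(x, y) \<in> stack_edges n (perm_m n \<tau>) (perm_m n \<sigma>)"
  shows "good n x \<and> good n y \<and> cls \<sigma> \<tau> x = cls \<sigma> \<tau> y"
  using e s t unfolding stack_edges_def invo_def
  by (auto simp: perm_m_def elim!: inr.elims)

lemma rtr_inv:
  assumes s: "invo n \<sigma>" and t: "invo n \<tau>"
    and e: "(x, y) \<in> (stack_edges n (perm_m n \<tau>) (perm_m n \<sigma>))\<^sup>*"
  shows "x = y \<or> (good n x \<and> good n y \<and> cls \<sigma> \<tau> x = cls \<sigma> \<tau> y)"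
  using e
proof (induction rule: rtrancl_induct)
  case base then show ?case by simp
next
  case (step y z)
  from edge_inv[OF s t step(2)] step(3) show ?case by auto
qed

lemma edgeL:
  assumes "1 \<le> i" "i \<le> n" "invo n \<sigma>"
  shows "(L0 i, L1 (\<sigma> i)) \<in> stack_edges n m1 (perm_m n \<sigma>)"
    and "(L1 (\<sigma> i), L0 i) \<in> stack_edges n m1 (perm_m n \<sigma>)"
proof -
  show "(L0 i, L1 (\<sigma> i)) \<in> stack_edges n m1 (perm_m n \<sigma>)"
    unfolding stack_edges_def
    by (rule UnI1, rule CollectI, rule exI[of _ "Bt i"]) (use assms in \<open>auto simp: perm_m_def\<close>)
  show "(L1 (\<sigma> i), L0 i) \<in> stack_edges n m1 (perm_m n \<sigma>)"
    unfolding stack_edges_def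
    by (rule UnI1, rule CollectI, rule exI[of _ "Tp (\<sigma> i)"]) (use assms in \<open>auto simp: perm_m_def invo_def\<close>)
qed

lemma edgeU:
  assumes "1 \<le> i" "i \<le> n" "invo n \<tau>"
  shows "(L1 i, L2 (\<tau> i)) \<in> stack_edges n (perm_m n \<tau>) m2"
    and "(L2 (\<tau> i), L1 i) \<in> stack_edges n (perm_m n \<tau>) m2"
proof -
  show "(L1 i, L2 (\<tau> i)) \<in> stack_edges n (perm_m n \<tau>) m2"
    unfolding stack_edges_def
    by (rule UnI2, rule CollectI, rule exI[of _ "Bt i"]) (use assms in \<open>auto simp: perm_m_def\<close>)
  show "(L2 (\<tau> i), L1 i) \<in> stack_edges n (perm_m n \<tau>) m2"
    unfolding stack_edges_def
    by (rule UnI2, rule CollectI, rule exI[of _ "Tp (\<tau> i)"]) (use assms in \<open>auto simp: perm_m_def invo_def\<close>)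
qed

lemma comp_perm:
  assumes s: "invo n \<sigma>" and t: "invo n \<tau>"
    and r1: "\<And>j. \<tau> (\<sigma> j) = \<rho> j" and r2: "\<And>j. \<sigma> (\<tau> j) = \<rho> j"
  shows "comp_match n (perm_m n \<tau>) (perm_m n \<sigma>) = perm_m n \<rho>"
proof
  fix p
  let ?E = "stack_edges n (perm_m n \<tau>) (perm_m n \<sigma>)"
  show "comp_match n (perm_m n \<tau>) (perm_m n \<sigma>) p = perm_m n \<rho> p"
  proof (cases "inr n p")
    case False then show ?thesis by (simp add: comp_match_def perm_m_def)
  next
    case True
    show ?thesis
    proof (cases p)
      case (Bt i)
      with True have i: "1 \<le> i" "i \<le> n" by auto
      have si: "1 \<le> \<sigma> i" "\<sigma> i \<le> n" using s i unfolding invo_def by auto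
      have path: "(L0 i, L2 (\<tau> (\<sigma> i))) \<in> ?E\<^sup>*"
        using edgeL(1)[OF i s, of "perm_m n \<tau>"] edgeU(1)[OF si t, of "perm_m n \<sigma>"] by auto
      have q: "inr n (Tp (\<rho> i))" using t si r1[of i] unfolding invo_def by auto
      have "(THE q. inr n q \<and> q \<noteq> p \<and> (embOut p, embOut q) \<in> ?E\<^sup>*) = Tp (\<rho> i)"
      proof (rule the_equality)
        show "inr n (Tp (\<rho> i)) \<and> Tp (\<rho> i) \<noteq> p \<and> (embOut p, embOut (Tp (\<rho> i))) \<in> ?E\<^sup>*"
          using q path Bt r1[of i] by simp
      next
        fix q assume h: "inr n q \<and> q \<noteq> p \<and> (embOut p, embOut q) \<in> ?E\<^sup>*"
        then have "embOut p = embOut q \<or> (good n (embOut p) \<and> good n (embOut q) \<and> cls \<sigma> \<tau> (embOut p) = cls \<sigma> \<tau> (embOut q))"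
          using rtr_inv[OF s t] by blast
        then show "q = Tp (\<rho> i)" using h Bt s t r1 r2 unfolding invo_def
          by (cases q) (auto, metis)
      qed
      then show ?thesis using True Bt by (simp add: comp_match_def perm_m_def)
    next
      case (Tp l)
      with True have l: "1 \<le> l" "l \<le> n" by auto
      have tl: "1 \<le> \<tau> l" "\<tau> l \<le> n" using t l unfolding invo_def by auto
      have tt: "\<tau> (\<tau> l) = l" using t unfolding invo_def by auto
      have stl: "1 \<le> \<sigma> (\<tau> l)" "\<sigma> (\<tau> l) \<le> n" "\<sigma> (\<sigma> (\<tau> l)) = \<tau> l"
        using s tl unfolding invo_def by auto
      have path: "(L2 l, L0 (\<sigma> (\<tau> l))) \<in> ?E\<^sup>*"
        using edgeU(2)[OF tl t, of "perm_m n \<sigma>"] edgeL(2)[OF stl(1,2) s, of "perm_m n \<tau>"] stl(3) tt by auto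
      have q: "inr n (Bt (\<rho> l))" using s tl r2[of l] unfolding invo_def by auto
      have "(THE q. inr n q \<and> q \<noteq> p \<and> (embOut p, embOut q) \<in> ?E\<^sup>*) = Bt (\<rho> l)"
      proof (rule the_equality)
        show "inr n (Bt (\<rho> l)) \<and> Bt (\<rho> l) \<noteq> p \<and> (embOut p, embOut (Bt (\<rho> l))) \<in> ?E\<^sup>*"
          using q path Tp r2[of l] by simp
      next
        fix q assume h: "inr n q \<and> q \<noteq> p \<and> (embOut p, embOut q) \<in> ?E\<^sup>*"
        then have "embOut p = embOut q \<or> (good n (embOut p) \<and> good n (embOut q) \<and> cls \<sigma> \<tau> (embOut p) = cls \<sigma> \<tau> (embOut q))"
          using rtr_inv[OF s t] by blast
        then show "q = Bt (\<rho> l)" using h Tp s t r1 r2 unfolding invo_def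
          by (cases q) (auto, metis)
      qed
      then show ?thesis using True Tp by (simp add: comp_match_def perm_m_def)
    qed
  qed
qed

lemma loops_perm:
  assumes s: "invo n \<sigma>" and t: "invo n \<tau>"
  shows "nloops n (perm_m n \<tau>) (perm_m n \<sigma>) = 0"
proof -
  let ?E = "stack_edges n (perm_m n \<tau>) (perm_m n \<sigma>)"
  have "{L1 i | i. 1 \<le> i \<and> i \<le> n \<and> \<not> (\<exists>p. inr n p \<and> (L1 i, embOut p) \<in> ?E\<^sup>*)} = {}"
  proof -
    have "\<exists>p. inr n p \<and> (L1 i, embOut p) \<in> ?E\<^sup>*" if i: "1 \<le> i" "i \<le> n" for i
    proof -
      have ss: "\<sigma> (\<sigma> i) = i" "1 \<le> \<sigma> i" "\<sigma> i \<le> n" using s i unfolding invo_def by auto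
      have "(L1 (\<sigma> (\<sigma> i)), L0 (\<sigma> i)) \<in> ?E" using edgeL(2)[OF ss(2,3) s] .
      then have "(L1 i, embOut (Bt (\<sigma> i))) \<in> ?E\<^sup>*" using ss by auto
      then show ?thesis using ss by (intro exI[of _ "Bt (\<sigma> i)"]) auto
    qed
    then show ?thesis by blast
  qed
  then show ?thesis unfolding nloops_def Let_def by simp
qed

definition sw :: "nat \<Rightarrow> nat \<Rightarrow> nat" where
  "sw k j = (if j = k then k + 1 else if j = k + 1 then k else j)"

lemma sw_sw[simp]: "sw k (sw k j) = j" by (simp add: sw_def)

lemma invo_id: "invo n id" by (simp add: invo_def)
lemma invo_sw: "1 \<le> k \<Longrightarrow> k < n \<Longrightarrow> invo n (sw k)" by (auto simp: invo_def sw_def)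

lemma idm_perm: "idm n = perm_m n id"
  by (rule ext, case_tac x) (auto simp: idm_def perm_m_def)

lemma crossm_perm: "1 \<le> k \<Longrightarrow> k < n \<Longrightarrow> crossm n k = perm_m n (sw k)"
  by (rule ext, case_tac x) (auto simp: crossm_def idm_def perm_m_def sw_def)

lemma Br_perm:
  assumes a: "a \<in> Seq r t" and b: "b \<in> Seq r t" and s: "invo (r + t) \<sigma>"
    and lab: "\<And>i. 1 \<le> i \<Longrightarrow> i \<le> r + t \<Longrightarrow> ent a i = ent b (\<sigma> i)"
  shows "(a, b, perm_m (r + t) \<sigma>) \<in> Br r t"
proof -
  have h1: "inr (r + t) (perm_m (r + t) \<sigma> p) \<and> perm_m (r + t) \<sigma> p \<noteq> p \<and>
          perm_m (r + t) \<sigma> (perm_m (r + t) \<sigma> p) = p \<and>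
          (if same_row p (perm_m (r + t) \<sigma> p) then lbl a b p \<noteq> lbl a b (perm_m (r + t) \<sigma> p)
           else lbl a b p = lbl a b (perm_m (r + t) \<sigma> p))" if p: "inr (r + t) p" for p
  proof (cases p)
    case (Bt i) then show ?thesis using p s lab[of i] unfolding invo_def by (auto simp: perm_m_def)
  next
    case (Tp j)
    have "1 \<le> \<sigma> j" "\<sigma> j \<le> r + t" "\<sigma> (\<sigma> j) = j" using p Tp s unfolding invo_def by auto
    then show ?thesis using p s lab[of "\<sigma> j"] Tp unfolding invo_def by (auto simp: perm_m_def)
  qed
  have h2: "perm_m (r + t) \<sigma> p = p" if "\<not> inr (r + t) p" for p
    using that by (simp add: perm_m_def)
  show ?thesis unfolding Br_def using a b h1 h2 by blast
qed

lemma length_swp[simp]: "length (swp k a) = length a" by (simp add: swp_def)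

lemma ent_swp:
  assumes "1 \<le> k" "k < length a" "1 \<le> j" "j \<le> length a"
  shows "ent (swp k a) j = ent a (sw k j)"
  using assms by (auto simp: ent_def swp_def sw_def nth_list_update)

lemma swp_swp:
  assumes "1 \<le> k" "k < length a"
  shows "swp k (swp k a) = a"
proof (rule nth_equalityI)
  show "length (swp k (swp k a)) = length a" by simp
  fix i assume i: "i < length (swp k (swp k a))"
  have "i = k - 1 \<or> i = k \<or> (i \<noteq> k - 1 \<and> i \<noteq> k)" by auto
  then show "swp k (swp k a) ! i = a ! i"
    using assms i by (elim disjE) (auto simp: swp_def nth_list_update)
qed

lemma swp_Seq:
  assumes a: "a \<in> Seq r t" and k: "1 \<le> k" "k < r + t"
  shows "swp k a \<in> Seq r t"
proof -
  have l: "length a = r + t" using a by (simp add: Seq_def)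
  have "mset (swp k a) = mset a" unfolding swp_def using mset_swap[of k a "k - 1"] k l by simp
  then have "length (filter id (swp k a)) = length (filter id a)"
    by (metis mset_filter size_mset)
  then show ?thesis using a by (simp add: Seq_def)
qed

lemma dcomp_perm:
  assumes "length a2 = n" "invo n \<sigma>" "invo n \<tau>"
    "\<And>j. \<tau> (\<sigma> j) = \<rho> j" "\<And>j. \<sigma> (\<tau> j) = \<rho> j"
  shows "dcomp (a1, b1, perm_m n \<tau>) (a2, b2, perm_m n \<sigma>) = (a2, b1, perm_m n \<rho>)"
    and "dloops (a1, b1, perm_m n \<tau>) (a2, b2, perm_m n \<sigma>) = 0"
  using assms comp_perm loops_perm by auto


definition addv :: "('v::ab_group_add \<Rightarrow> 'v) \<Rightarrow> bool" where
  "addv f \<longleftrightarrow> (\<forall>x y. f (x + y) = f x + f y)"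

lemma addv_zero: "addv f \<Longrightarrow> f 0 = 0"
  unfolding addv_def by (metis add_cancel_right_right)
lemma addv_minus: "addv f \<Longrightarrow> f (- x) = - f x"
  unfolding addv_def by (metis add_eq_0_iff add.right_inverse add_cancel_right_right)
lemma addv_diff: "addv f \<Longrightarrow> f (x - y) = f x - f y"
  using addv_minus[of f y] unfolding addv_def by (metis diff_conv_add_uminus)
lemma addv_pow: "addv f \<Longrightarrow> addv (f ^^ m)"
  by (induction m) (auto simp: addv_def)
lemma pow_zero: "addv f \<Longrightarrow> (f ^^ m) 0 = 0"
  using addv_zero[OF addv_pow] by blast

lemma pow_comm:
  assumes "\<And>x. f (g x) = g (f x)"
  shows "(f ^^ m) (g x) = g ((f ^^ m) x)"
  using assms by (induction m) auto

lemma pow_kill: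
  assumes "addv f" "(f ^^ p) x = 0" "p \<le> m"
  shows "(f ^^ m) x = 0"
proof -
  have "(f ^^ m) x = (f ^^ (m - p)) ((f ^^ p) x)"
    using assms(3) by (metis funpow_add le_add_diff_inverse2 o_apply)
  then show ?thesis using assms pow_zero by simp
qed

lemma nil_comb:
  assumes A: "addv A" and B: "addv B" and AB: "\<And>x. A (B x) = B (A x)"
    and C: "\<And>x. C x = A x + B x"
  shows "(A ^^ p) w = 0 \<Longrightarrow> (B ^^ q) w = 0 \<Longrightarrow> (C ^^ (p + q)) w = 0"
proof (induction "p + q" arbitrary: p q w)
  case 0 then show ?case by simp
next
  case (Suc m)
  have Cadd: "addv C" using A B C unfolding addv_def by (simp add: algebra_simps)
  show ?case
  proof (cases "p = 0 \<or> q = 0")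
    case True
    then have "w = 0" using Suc.prems by auto
    then show ?thesis using pow_zero[OF Cadd] by simp
  next
    case False
    then obtain p' q' where pq: "p = Suc p'" "q = Suc q'" by (metis not0_implies_Suc)
    have e1: "(A ^^ p') (A w) = 0" using Suc.prems pq by (simp add: funpow_Suc_right del: funpow.simps)
    have e2: "(B ^^ q) (A w) = 0" using pow_comm[of B A q w] AB Suc.prems addv_zero[OF A] by simp
    have e3: "(A ^^ p) (B w) = 0" using pow_comm[of A B p w] AB Suc.prems addv_zero[OF B] by simp
    have e4: "(B ^^ q') (B w) = 0" using Suc.prems pq by (simp add: funpow_Suc_right del: funpow.simps)
    have i1: "(C ^^ (p' + q)) (A w) = 0" using Suc.hyps(1)[of p' q] e1 e2 Suc.hyps(2) pq by simp
    have i2: "(C ^^ (p + q')) (B w) = 0" using Suc.hyps(1)[of p q'] e3 e4 Suc.hyps(2) pq by simp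
    have "(C ^^ (p + q)) w = (C ^^ m) (C w)" using Suc.hyps(2) by (metis funpow_Suc_right o_apply)
    also have "\<dots> = (C ^^ m) (A w) + (C ^^ m) (B w)"
      using addv_pow[OF Cadd] C unfolding addv_def by simp
    finally show ?thesis using i1 i2 Suc.hyps(2) pq by simp
  qed
qed




locale vbr = vector_space scl
  for scl :: "complex \<Rightarrow> 'v::ab_group_add \<Rightarrow> 'v" +
  fixes r t :: nat and \<omega> :: "nat \<Rightarrow> complex" and act :: "diag \<Rightarrow> 'v \<Rightarrow> 'v" and Y :: "nat \<Rightarrow> 'v \<Rightarrow> 'v"
  assumes M: "VBr_module r t \<omega> scl act Y"
begin

definition lin :: "('v \<Rightarrow> 'v) \<Rightarrow> bool" where
  "lin f \<longleftrightarrow> (\<forall>x y. f (x + y) = f x + f y) \<and> (\<forall>c x. f (scl c x) = scl c (f x))"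

lemma lin_addv: "lin f \<Longrightarrow> addv f" by (simp add: lin_def addv_def)
lemma lin_add: "lin f \<Longrightarrow> f (x + y) = f x + f y" by (simp add: lin_def)
lemma lin_scl: "lin f \<Longrightarrow> f (scl c x) = scl c (f x)" by (simp add: lin_def)
lemma lin_zero: "lin f \<Longrightarrow> f 0 = 0" by (rule addv_zero[OF lin_addv])
lemma lin_diff: "lin f \<Longrightarrow> f (x - y) = f x - f y" by (rule addv_diff[OF lin_addv])
lemma lin_minus: "lin f \<Longrightarrow> f (- x) = - f x" by (rule addv_minus[OF lin_addv])

lemma lin_of_linear: "Vector_Spaces.linear scl scl f \<Longrightarrow> lin f"
  unfolding Vector_Spaces.linear_def module_hom_iff lin_def by blast

lemma lin_plus: "lin f \<Longrightarrow> lin g \<Longrightarrow> lin (\<lambda>x. f x + g x)"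
  by (simp add: lin_def scale_right_distrib)
lemma lin_sub: "lin f \<Longrightarrow> lin g \<Longrightarrow> lin (\<lambda>x. f x - g x)"
  by (simp add: lin_def scale_right_diff_distrib)
lemma lin_scl_id: "lin (\<lambda>x. scl c x)"
  by (simp add: lin_def scale_right_distrib scale_left_commute)
lemma lin_comp: "lin f \<Longrightarrow> lin g \<Longrightarrow> lin (\<lambda>x. f (g x))"
  by (simp add: lin_def)
lemma lin_id: "lin (\<lambda>x. x)" by (simp add: lin_def)
lemma lin_pow: "lin f \<Longrightarrow> lin (f ^^ m)"
  by (induction m) (auto simp: lin_def)
lemma lin_sum: "(\<And>b. b \<in> B \<Longrightarrow> lin (F b)) \<Longrightarrow> lin (\<lambda>x. \<Sum>b\<in>B. F b x)"
  unfolding lin_def by (simp add: sum.distrib scale_sum_right)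

lemma pow_scl:
  assumes "lin C" "C u = scl \<alpha> u"
  shows "(C ^^ m) u = scl (\<alpha> ^ m) u"
  using assms by (induction m) (auto simp: lin_scl mult.commute)

abbreviation "nn \<equiv> r + t"
abbreviation "S \<equiv> opS r t act"
abbreviation "Sh \<equiv> opShat r t act"
abbreviation "Eh \<equiv> opEhat r t act"

lemmas Mc = M[unfolded VBr_module_def Let_def]

lemma linact: "d \<in> Br r t \<Longrightarrow> lin (act d)"
  using Mc[THEN conjunct2, THEN conjunct2, THEN conjunct1] lin_of_linear by blast
lemma linY: "j \<in> {1..nn} \<Longrightarrow> lin (Y j)"
  using Mc[THEN conjunct2, THEN conjunct2, THEN conjunct2, THEN conjunct1] lin_of_linear by blast
lemma mult: "d1 \<in> Br r t \<Longrightarrow> d2 \<in> Br r t \<Longrightarrow>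
   act d1 (act d2 v) = (if dtgt d2 = dsrc d1 then scl ((\<omega> 0) ^ dloops d1 d2) (act (dcomp d1 d2) v) else 0)"
  using Mc[THEN conjunct2, THEN conjunct2, THEN conjunct2, THEN conjunct2, THEN conjunct1] by blast
lemma Ycomm: "i \<in> {1..nn} \<Longrightarrow> j \<in> {1..nn} \<Longrightarrow> Y i (Y j v) = Y j (Y i v)"
  using Mc[THEN conjunct2, THEN conjunct2, THEN conjunct2, THEN conjunct2, THEN conjunct2, THEN conjunct2, THEN conjunct1] by blast
lemma Y1: "i \<in> {1..nn} \<Longrightarrow> a \<in> Seq r t \<Longrightarrow> Y i (act (d_one a) v) = act (d_one a) (Y i v)"
  using Mc[THEN conjunct2, THEN conjunct2, THEN conjunct2, THEN conjunct2, THEN conjunct2, THEN conjunct2, THEN conjunct2, THEN conjunct1] by blast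
lemma YS: "i \<in> {1..nn} \<Longrightarrow> k \<in> {1..<nn} \<Longrightarrow> i \<notin> {k, k + 1} \<Longrightarrow>
    Y i (S k v) = S k (Y i v) \<and> Y i (Sh k v) = Sh k (Y i v)"
  using Mc[THEN conjunct2, THEN conjunct2, THEN conjunct2, THEN conjunct2, THEN conjunct2, THEN conjunct2, THEN conjunct2, THEN conjunct2, THEN conjunct1] by blast
lemma relS: "k \<in> {1..<nn} \<Longrightarrow> a \<in> Seq r t \<Longrightarrow> ent a k = ent a (k + 1) \<Longrightarrow>
        S k (Y k (act (d_one a) v)) - Y (k + 1) (S k (act (d_one a) v)) = - act (d_one a) v \<and>
        S k (Y (k + 1) (act (d_one a) v)) - Y k (S k (act (d_one a) v)) = act (d_one a) v"
  using Mc[THEN conjunct2, THEN conjunct2, THEN conjunct2, THEN conjunct2, THEN conjunct2, THEN conjunct2, THEN conjunct2, THEN conjunct2, THEN conjunct2, THEN conjunct2, THEN conjunct1] by blast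
lemma relSh: "k \<in> {1..<nn} \<Longrightarrow>
        Sh k (Y k v) - Y (k + 1) (Sh k v) = Eh k v \<and>
        Sh k (Y (k + 1) v) - Y k (Sh k v) = - Eh k v"
  using Mc[THEN conjunct2, THEN conjunct2, THEN conjunct2, THEN conjunct2, THEN conjunct2, THEN conjunct2, THEN conjunct2, THEN conjunct2, THEN conjunct2, THEN conjunct2, THEN conjunct2, THEN conjunct1] by blast
lemma relE: "k \<in> {1..<nn} \<Longrightarrow> Eh k (Y k v + Y (k + 1) v) = 0"
  using Mc[THEN conjunct2, THEN conjunct2, THEN conjunct2, THEN conjunct2, THEN conjunct2, THEN conjunct2, THEN conjunct2, THEN conjunct2, THEN conjunct2, THEN conjunct2, THEN conjunct2, THEN conjunct2] by blast

lemma finSeq: "finite (Seq r t)"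
proof -
  have "Seq r t \<subseteq> {xs. set xs \<subseteq> UNIV \<and> length xs = r + t}" by (auto simp: Seq_def)
  moreover have "finite {xs::bool list. set xs \<subseteq> UNIV \<and> length xs = r + t}"
    by (rule finite_lists_length_eq) simp
  ultimately show ?thesis using finite_subset by blast
qed

lemma ent_swp_sw: "1 \<le> k \<Longrightarrow> k < length a \<Longrightarrow> 1 \<le> i \<Longrightarrow> i \<le> length a \<Longrightarrow>
   ent (swp k a) (sw k i) = ent a i"
  using ent_swp[of k a "sw k i"] by (auto simp: sw_def)

lemma lenSeq: "a \<in> Seq r t \<Longrightarrow> length a = nn" by (simp add: Seq_def)

lemma one_eq: "a \<in> Seq r t \<Longrightarrow> d_one a = (a, a, perm_m nn id)"
  by (simp add: d_one_def lenSeq idm_perm)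
lemma s_eq: "a \<in> Seq r t \<Longrightarrow> k \<in> {1..<nn} \<Longrightarrow> d_s k a = (a, a, perm_m nn (sw k))"
  by (simp add: d_s_def lenSeq crossm_perm)
lemma sh_eq: "a \<in> Seq r t \<Longrightarrow> k \<in> {1..<nn} \<Longrightarrow> d_shat k a = (a, swp k a, perm_m nn (sw k))"
  by (simp add: d_shat_def lenSeq crossm_perm)

lemma one_Br: "a \<in> Seq r t \<Longrightarrow> d_one a \<in> Br r t"
  by (simp add: one_eq Br_perm invo_id)
lemma s_Br: "a \<in> Seq r t \<Longrightarrow> k \<in> {1..<nn} \<Longrightarrow> ent a k = ent a (k + 1) \<Longrightarrow> d_s k a \<in> Br r t"
  unfolding s_eq by (rule Br_perm) (auto simp: invo_sw sw_def)
lemma sh_Br: "a \<in> Seq r t \<Longrightarrow> k \<in> {1..<nn} \<Longrightarrow> d_shat k a \<in> Br r t"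
  unfolding sh_eq by (rule Br_perm) (auto simp: invo_sw swp_Seq ent_swp_sw lenSeq)

lemma multp:
  assumes "(a1, b1, perm_m nn \<tau>) \<in> Br r t" "(a2, a1, perm_m nn \<sigma>) \<in> Br r t"
    "invo nn \<sigma>" "invo nn \<tau>" "\<And>j. \<tau> (\<sigma> j) = \<rho> j" "\<And>j. \<sigma> (\<tau> j) = \<rho> j"
  shows "act (a1, b1, perm_m nn \<tau>) (act (a2, a1, perm_m nn \<sigma>) v) = act (a2, b1, perm_m nn \<rho>) v"
proof -
  have l: "length a2 = nn" using assms(2) by (simp add: Br_def Seq_def)
  show ?thesis using mult[OF assms(1,2), of v] dcomp_perm[OF l assms(3-6)] by simp
qed

lemma linS: "k \<in> {1..<nn} \<Longrightarrow> lin (S k)"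
proof -
  assume k: "k \<in> {1..<nn}"
  have "lin (\<lambda>x. \<Sum>b\<in>{b\<in>Seq r t. ent b k = ent b (k + 1)}. act (d_s k b) x)"
    by (rule lin_sum, rule linact, rule s_Br) (use k in auto)
  then show ?thesis unfolding opS_def[abs_def] .
qed

lemma linSh: "k \<in> {1..<nn} \<Longrightarrow> lin (Sh k)"
proof -
  assume k: "k \<in> {1..<nn}"
  have "lin (\<lambda>x. \<Sum>b\<in>{b\<in>Seq r t. ent b k \<noteq> ent b (k + 1)}. act (d_shat k b) x)"
    by (rule lin_sum, rule linact, rule sh_Br) (use k in auto)
  then show ?thesis unfolding opShat_def[abs_def] .
qed

lemma swp_ent_ne: "a \<in> Seq r t \<Longrightarrow> k \<in> {1..<nn} \<Longrightarrow> swp k a \<in> Seq r t"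
  using swp_Seq by auto

lemma sumS:
  assumes a: "a \<in> Seq r t" and k: "k \<in> {1..<nn}" and e: "ent a k = ent a (k + 1)"
  shows "S k (act (d_one a) w) = act (d_s k a) w"
proof -
  let ?B = "{b\<in>Seq r t. ent b k = ent b (k + 1)}"
  have fin: "finite ?B" using finSeq by simp
  have aB: "a \<in> ?B" using a e by simp
  have z: "act (d_s k b) (act (d_one a) w) = 0" if "b \<in> ?B - {a}" for b
    using mult[OF s_Br one_Br[OF a], of b k w] that k by (auto simp: d_one_def d_s_def)
  have "S k (act (d_one a) w) = act (d_s k a) (act (d_one a) w)"
    unfolding opS_def sum.remove[OF fin aB] using z by simp
  also have "\<dots> = act (d_s k a) w"
    using multp[of a a "sw k" a id "sw k" w] s_Br[OF a k e] one_Br[OF a] invo_id invo_sw[of k nn] k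
    by (simp add: s_eq[OF a k] one_eq[OF a])
  finally show ?thesis .
qed

lemma one_s:
  assumes a: "a \<in> Seq r t" and k: "k \<in> {1..<nn}" and e: "ent a k = ent a (k + 1)"
  shows "act (d_one a) (act (d_s k a) w) = act (d_s k a) w"
  using multp[of a a id a "sw k" "sw k" w] s_Br[OF a k e] one_Br[OF a] invo_id invo_sw[of k nn] k
  by (simp add: s_eq[OF a k] one_eq[OF a])

lemma s_s:
  assumes a: "a \<in> Seq r t" and k: "k \<in> {1..<nn}" and e: "ent a k = ent a (k + 1)"
  shows "act (d_s k a) (act (d_s k a) w) = act (d_one a) w"
  using multp[of a a "sw k" a "sw k" id w] s_Br[OF a k e] invo_sw[of k nn] k
  by (simp add: s_eq[OF a k] one_eq[OF a])

lemma sumSh: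
  assumes a: "a \<in> Seq r t" and k: "k \<in> {1..<nn}" and e: "ent a k \<noteq> ent a (k + 1)"
  shows "Sh k (act (d_one a) w) = act (d_shat k a) w"
proof -
  let ?B = "{b\<in>Seq r t. ent b k \<noteq> ent b (k + 1)}"
  have fin: "finite ?B" using finSeq by simp
  have aB: "a \<in> ?B" using a e by simp
  have z: "act (d_shat k b) (act (d_one a) w) = 0" if "b \<in> ?B - {a}" for b
    using mult[OF sh_Br one_Br[OF a], of b k w] that k by (auto simp: d_one_def d_shat_def)
  have "Sh k (act (d_one a) w) = act (d_shat k a) (act (d_one a) w)"
    unfolding opShat_def sum.remove[OF fin aB] using z by simp
  also have "\<dots> = act (d_shat k a) w"
    using multp[of a "swp k a" "sw k" a id "sw k" w] sh_Br[OF a k] one_Br[OF a] invo_id invo_sw[of k nn] k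
    by (simp add: sh_eq[OF a k] one_eq[OF a])
  finally show ?thesis .
qed

lemma one_sh:
  assumes a: "a \<in> Seq r t" and k: "k \<in> {1..<nn}"
  shows "act (d_one (swp k a)) (act (d_shat k a) w) = act (d_shat k a) w"
proof -
  have sa: "swp k a \<in> Seq r t" using swp_Seq a k by auto
  show ?thesis
  using multp[of "swp k a" "swp k a" id a "sw k" "sw k" w] sh_Br[OF a k] one_Br[OF sa] invo_id invo_sw[of k nn] k
  by (simp add: sh_eq[OF a k] one_eq[OF sa])
qed

lemma sh_sh:
  assumes a: "a \<in> Seq r t" and k: "k \<in> {1..<nn}"
  shows "act (d_shat k (swp k a)) (act (d_shat k a) w) = act (d_one a) w"
proof -
  have sa: "swp k a \<in> Seq r t" using swp_Seq a k by auto
  have ss: "swp k (swp k a) = a" using swp_swp[of k a] k lenSeq[OF a] by auto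
  show ?thesis
  using multp[of "swp k a" a "sw k" a "sw k" id w] sh_Br[OF a k] sh_Br[OF sa k] invo_sw[of k nn] k
  by (simp add: sh_eq[OF a k] sh_eq[OF sa k] one_eq[OF a] ss)
qed

lemma iter_inter:
  assumes "\<And>u. u \<in> R \<Longrightarrow> f (\<phi> u) = \<phi> (g u)" "\<And>u. u \<in> R \<Longrightarrow> g u \<in> R" "u \<in> R"
  shows "(f ^^ m) (\<phi> u) = \<phi> ((g ^^ m) u) \<and> (g ^^ m) u \<in> R"
  using assms by (induction m) auto

lemma neg_pow: "lin B \<Longrightarrow> ((\<lambda>x. - B x) ^^ q) z = scl ((-1) ^ q) ((B ^^ q) z)"
  by (induction q) (simp_all add: lin_scl)

lemma kill_plus:
  assumes A: "lin A" and B: "lin B" and AB: "\<And>x. A (B x) = B (A x)"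
    and p: "(A ^^ p) z = 0" and q: "(B ^^ q) z = 0"
    and e: "A z + B z = scl \<alpha> z" and al: "\<alpha> \<noteq> 0"
  shows "z = 0"
proof -
  let ?C = "\<lambda>x. A x + B x"
  have "(?C ^^ (p + q)) z = 0"
    by (rule nil_comb[OF lin_addv[OF A] lin_addv[OF B] AB _ p q]) simp
  moreover have "(?C ^^ (p + q)) z = scl (\<alpha> ^ (p + q)) z"
    by (rule pow_scl[OF lin_plus[OF A B] e])
  ultimately show ?thesis using al by simp
qed

lemma kill_minus:
  assumes A: "lin A" and B: "lin B" and AB: "\<And>x. A (B x) = B (A x)"
    and p: "(A ^^ p) z = 0" and q: "(B ^^ q) z = 0"
    and e: "A z - B z = scl \<alpha> z" and al: "\<alpha> \<noteq> 0"
  shows "z = 0"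
proof -
  have nB: "lin (\<lambda>x. - B x)" using B by (simp add: lin_def scale_minus_right)
  show ?thesis
  proof (rule kill_plus[OF A nB _ p _ _ al])
    fix x show "A (- B x) = - B (A x)" using AB lin_minus[OF A] by simp
  next
    show "((\<lambda>x. - B x) ^^ q) z = 0" using neg_pow[OF B] q by simp
  next
    show "A z + - B z = scl \<alpha> z" using e by simp
  qed
qed

definition Aop :: "nat \<Rightarrow> complex \<Rightarrow> 'v \<Rightarrow> 'v" where
  "Aop j c = (\<lambda>x. Y j x - scl c x)"

lemma lin_Aop: "j \<in> {1..nn} \<Longrightarrow> lin (Aop j c)"
  unfolding Aop_def by (rule lin_sub[OF linY lin_scl_id])

lemma Aop_Y: "j \<in> {1..nn} \<Longrightarrow> l \<in> {1..nn} \<Longrightarrow> Aop j c (Y l x) = Y l (Aop j c x)"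
  unfolding Aop_def using linY[of l] Ycomm[of j l x] by (simp add: lin_diff lin_scl)

lemma Aop_comm:
  assumes j: "j \<in> {1..nn}" and l: "l \<in> {1..nn}"
  shows "Aop j c (Aop l d x) = Aop l d (Aop j c x)"
proof -
  have e1: "Aop j c (Aop l d x) = Y l (Y j x) - scl d (Y j x) - scl c (Y l x) + scl (c * d) x"
    unfolding Aop_def using Ycomm[OF j l, of x]
    by (simp add: lin_diff[OF linY[OF j]] lin_scl[OF linY[OF j]] scale_right_diff_distrib algebra_simps)
  have e2: "Aop l d (Aop j c x) = Y l (Y j x) - scl d (Y j x) - scl c (Y l x) + scl (c * d) x"
    unfolding Aop_def
    by (simp add: lin_diff[OF linY[OF l]] lin_scl[OF linY[OF l]] scale_right_diff_distrib algebra_simps mult.commute)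
  show ?thesis by (simp only: e1 e2)
qed

lemma Aop_act1: "j \<in> {1..nn} \<Longrightarrow> a \<in> Seq r t \<Longrightarrow> Aop j c (act (d_one a) y) = act (d_one a) (Aop j c y)"
  unfolding Aop_def using Y1[of j a y] linact[OF one_Br, of a] by (simp add: lin_diff lin_scl)

lemma gen_eig_Aop: "gen_eig nn scl act Y a i =
   {v. v \<in> range (act (d_one a)) \<and> (\<exists>N. \<forall>k\<in>{1..nn}. (Aop k (i k) ^^ N) v = 0)}"
  unfolding gen_eig_def Aop_def ..

lemma sw_range: "k \<in> {1..<nn} \<Longrightarrow> j \<in> {1..nn} \<Longrightarrow> sw k j \<in> {1..nn}"
  by (auto simp: sw_def)

lemma swpv_sw: "swpv k i j = i (sw k j)"
  by (simp add: swpv_def sw_def)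

lemma caseb:
  assumes a: "a \<in> Seq r t" and k: "k \<in> {1..<nn}" and e: "ent a k \<noteq> ent a (k + 1)"
    and s0: "i k + i (k + 1) \<noteq> 0"
    and hyp: "\<forall>v\<in>gen_eig nn scl act Y (swp k a) (swpv k i). Y k v - scl (i (k + 1)) v = 0"
    and v: "v \<in> gen_eig nn scl act Y a i"
  shows "Y (k + 1) v - scl (i (k + 1)) v = 0"
proof -
  have k1: "k \<in> {1..nn}" "k + 1 \<in> {1..nn}" using k by auto
  from v obtain x0 N where v0: "v = act (d_one a) x0" and nil: "\<forall>j\<in>{1..nn}. (Aop j (i j) ^^ N) v = 0"
    unfolding gen_eig_Aop by blast
  define P where "P = (\<lambda>x. Y k x + Y (k + 1) x)"
  define \<phi> where "\<phi> = (\<lambda>x. Sh k (P x))"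
  have linP: "lin P" unfolding P_def using lin_plus linY k1 by blast
  have lph: "lin \<phi>" unfolding \<phi>_def using lin_comp[OF linSh[OF k] linP] .
  have PY: "P (Y j x) = Y j (P x)" if "j \<in> {1..nn}" for j x
    unfolding P_def using lin_add[OF linY[OF that]] Ycomm[OF that k1(1)] Ycomm[OF that k1(2)] by simp
  have EP: "Eh k (P x) = 0" for x unfolding P_def using relE[OF k] .
  have I: "Y j (\<phi> x) = \<phi> (Y (sw k j) x)" if j: "j \<in> {1..nn}" for j x
  proof -
    consider "j = k" | "j = k + 1" | "j \<noteq> k \<and> j \<noteq> k + 1" by blast
    then show ?thesis
    proof cases
      case 1
      have "Y k (Sh k (P x)) = Sh k (Y (k + 1) (P x)) + Eh k (P x)"
        using relSh[OF k, of "P x"] by (simp add: algebra_simps)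
      then show ?thesis using 1 EP PY[OF k1(2)] by (simp add: \<phi>_def sw_def)
    next
      case 2
      have "Y (k + 1) (Sh k (P x)) = Sh k (Y k (P x)) - Eh k (P x)"
        using relSh[OF k, of "P x"] by (simp add: algebra_simps)
      then show ?thesis using 2 EP PY[OF k1(1)] by (simp add: \<phi>_def sw_def)
    next
      case 3
      then show ?thesis using YS[OF j k] PY[OF j] by (simp add: \<phi>_def sw_def)
    qed
  qed
  have AI: "Aop j (swpv k i j) (\<phi> x) = \<phi> (Aop (sw k j) (i (sw k j)) x)" if j: "j \<in> {1..nn}" for j x
    unfolding Aop_def using I[OF j] by (simp add: lin_diff[OF lph] lin_scl[OF lph] swpv_sw)
  have pw: "(Aop j (swpv k i j) ^^ N) (\<phi> v) = 0" if j: "j \<in> {1..nn}" for j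
  proof -
    have "(Aop j (swpv k i j) ^^ N) (\<phi> v) = \<phi> ((Aop (sw k j) (i (sw k j)) ^^ N) v)"
      using iter_inter[of UNIV "Aop j (swpv k i j)" \<phi> "Aop (sw k j) (i (sw k j))" v N] AI[OF j] by simp
    also have "\<dots> = 0" using nil sw_range[OF k j] lin_zero[OF lph] by simp
    finally show ?thesis .
  qed
  have sa: "swp k a \<in> Seq r t" using swp_Seq a k by auto
  have P1: "P (act (d_one a) y) = act (d_one a) (P y)" for y
    unfolding P_def using Y1[OF k1(1) a] Y1[OF k1(2) a] lin_add[OF linact[OF one_Br[OF a]]] by simp
  have "\<phi> v = act (d_one (swp k a)) (act (d_shat k a) (P x0))"
    unfolding \<phi>_def v0 P1 sumSh[OF a k e] one_sh[OF a k] ..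
  then have "\<phi> v \<in> gen_eig nn scl act Y (swp k a) (swpv k i)"
    unfolding gen_eig_Aop using pw by blast
  then have h: "Y k (\<phi> v) - scl (i (k + 1)) (\<phi> v) = 0" using hyp by blast
  define w where "w = Aop (k + 1) (i (k + 1)) v"
  have "swpv k i k = i (k + 1)" by (simp add: swpv_def)
  then have pw0: "\<phi> w = 0" using AI[OF k1(1), of v] h unfolding w_def by (simp add: Aop_def sw_def)
  define y where "y = Aop (k + 1) (i (k + 1)) x0"
  have wy: "w = act (d_one a) y" unfolding w_def y_def v0 using Aop_act1[OF k1(2) a] .
  have "act (d_shat k a) (P y) = 0" using pw0 unfolding \<phi>_def wy P1 sumSh[OF a k e] .
  have esa: "ent (swp k a) k \<noteq> ent (swp k a) (k + 1)"
    using e ent_swp[of k a k] ent_swp[of k a "k + 1"] k lenSeq[OF a] by (auto simp: sw_def)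
  have "P w = act (d_one a) (P y)" unfolding wy P1 ..
  also have "\<dots> = act (d_shat k (swp k a)) (act (d_shat k a) (P y))" using sh_sh[OF a k] by simp
  also have "\<dots> = 0" using \<open>act (d_shat k a) (P y) = 0\<close> lin_zero[OF linact[OF sh_Br[OF sa k]]] by simp
  finally have Pw: "P w = 0" .
  let ?A = "Aop k (i k)" and ?B = "Aop (k + 1) (i (k + 1))"
  have AN: "(?A ^^ N) w = 0"
    unfolding w_def using pow_comm[of ?A ?B N v] Aop_comm[OF k1] nil k1 lin_zero[OF lin_Aop[OF k1(2)]] by simp
  have BN: "(?B ^^ N) w = 0"
    unfolding w_def using pow_comm[of ?B ?B N v] nil k1 lin_zero[OF lin_Aop[OF k1(2)]] by simp
  have sum: "?A w + ?B w = scl (- (i k + i (k + 1))) w"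
    using Pw unfolding P_def Aop_def by (simp add: algebra_simps scale_left_distrib)
  have al: "- (i k + i (k + 1)) \<noteq> 0" using s0 by (metis neg_equal_0_iff_equal)
  have "w = 0"
    by (rule kill_plus[OF lin_Aop[OF k1(1)] lin_Aop[OF k1(2)] _ AN BN sum al]) (use Aop_comm[OF k1] in auto)
  then show ?thesis unfolding w_def Aop_def .
qed

lemma casea:
  assumes a: "a \<in> Seq r t" and k: "k \<in> {1..<nn}" and e: "ent a k = ent a (k + 1)"
    and ne: "i (k + 1) \<notin> {i k, i k + 1, i k - 1}"
    and hyp: "\<forall>v\<in>gen_eig nn scl act Y a (swpv k i). Y k v - scl (i (k + 1)) v = 0"
    and v: "v \<in> gen_eig nn scl act Y a i"
  shows "Y (k + 1) v - scl (i (k + 1)) v = 0"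
proof -
  have k1: "k \<in> {1..nn}" "k + 1 \<in> {1..nn}" using k by auto
  from v obtain x0 N where v0: "v = act (d_one a) x0" and nil: "\<forall>j\<in>{1..nn}. (Aop j (i j) ^^ N) v = 0"
    unfolding gen_eig_Aop by blast
  define R where "R = range (act (d_one a))"
  define D where "D = (\<lambda>x. Y k x - Y (k + 1) x)"
  define \<phi> where "\<phi> = (\<lambda>x. S k (D x) + x)"
  have lS: "lin (S k)" using linS[OF k] .
  have lYk: "lin (Y k)" and lYk1: "lin (Y (k + 1))" using linY k1 by auto
  have lD: "lin D" unfolding D_def using lin_sub[OF lYk lYk1] .
  have lph: "lin \<phi>" unfolding \<phi>_def using lin_plus[OF lin_comp[OF lS lD] lin_id] .
  have l1: "lin (act (d_one a))" using linact[OF one_Br[OF a]] .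
  have RY: "Y j u \<in> R" if jj: "j \<in> {1..nn}" and uu: "u \<in> R" for j u
  proof -
    obtain y where y: "u = act (d_one a) y" using uu unfolding R_def by blast
    show ?thesis unfolding y Y1[OF jj a] R_def by (rule rangeI)
  qed
  have RS: "S k u \<in> R" if uu: "u \<in> R" for u
  proof -
    obtain y where y: "u = act (d_one a) y" using uu unfolding R_def by blast
    have "S k u = act (d_one a) (act (d_s k a) y)" unfolding y sumS[OF a k e] one_s[OF a k e] ..
    then show ?thesis unfolding R_def by simp
  qed
  have Radd: "u + u' \<in> R" "u - u' \<in> R" "scl c u \<in> R" if uu: "u \<in> R" "u' \<in> R" for u u' c
  proof -
    obtain y y' where y: "u = act (d_one a) y" "u' = act (d_one a) y'" using uu unfolding R_def by blast
    show "u + u' \<in> R" "u - u' \<in> R" "scl c u \<in> R"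
      unfolding R_def y lin_add[OF l1, symmetric] lin_diff[OF l1, symmetric] lin_scl[OF l1, symmetric]
      by (rule rangeI)+
  qed
  have RD: "D u \<in> R" if "u \<in> R" for u unfolding D_def using RY[OF k1(1) that] RY[OF k1(2) that] Radd by blast
  have Rph: "\<phi> u \<in> R" if "u \<in> R" for u unfolding \<phi>_def using RS[OF RD[OF that]] that Radd by blast
  have RA: "Aop j c u \<in> R" if "j \<in> {1..nn}" "u \<in> R" for j c u
    unfolding Aop_def using RY[OF that] that(2) Radd by blast
  have SS: "S k (S k u) = u" if uu: "u \<in> R" for u
  proof -
    obtain y where y: "u = act (d_one a) y" using uu unfolding R_def by blast
    show ?thesis unfolding y sumS[OF a k e]
      using sumS[OF a k e, of "act (d_s k a) y"] one_s[OF a k e, of y] s_s[OF a k e, of y] by simp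
  qed
  have R1: "S k (Y k u) = Y (k + 1) (S k u) - u" and R2: "S k (Y (k + 1) u) = Y k (S k u) + u" if uu: "u \<in> R" for u
  proof -
    obtain y where y: "u = act (d_one a) y" using uu unfolding R_def by blast
    show "S k (Y k u) = Y (k + 1) (S k u) - u" "S k (Y (k + 1) u) = Y k (S k u) + u"
      using relS[OF k a e, of y] unfolding y by (simp_all add: algebra_simps)
  qed
  have I: "Y j (\<phi> u) = \<phi> (Y (sw k j) u)" if j: "j \<in> {1..nn}" and u: "u \<in> R" for j u
  proof -
    have c: "Y k (Y (k + 1) u) = Y (k + 1) (Y k u)" using Ycomm[OF k1] .
    consider "j = k" | "j = k + 1" | "j \<noteq> k \<and> j \<noteq> k + 1" by blast
    then show ?thesis
    proof cases
      case 1
      have "Y k (\<phi> u) = Y k (S k (Y k u)) - Y k (S k (Y (k + 1) u)) + Y k u"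
        unfolding \<phi>_def D_def by (simp add: lin_add[OF lYk] lin_diff[OF lYk] lin_diff[OF lS])
      also have "\<dots> = (S k (Y (k + 1) (Y k u)) - Y k u) - (S k (Y (k + 1) (Y (k + 1) u)) - Y (k + 1) u) + Y k u"
        using R2[OF RY[OF k1(1) u]] R2[OF RY[OF k1(2) u]] by (simp add: algebra_simps)
      also have "\<dots> = \<phi> (Y (k + 1) u)"
        unfolding \<phi>_def D_def using c by (simp add: lin_diff[OF lS] algebra_simps)
      finally show ?thesis using 1 by (simp add: sw_def)
    next
      case 2
      have "Y (k + 1) (\<phi> u) = Y (k + 1) (S k (Y k u)) - Y (k + 1) (S k (Y (k + 1) u)) + Y (k + 1) u"
        unfolding \<phi>_def D_def by (simp only: lin_add[OF lYk1] lin_diff[OF lYk1] lin_diff[OF lS])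
      also have "\<dots> = (S k (Y k (Y k u)) + Y k u) - (S k (Y k (Y (k + 1) u)) + Y (k + 1) u) + Y (k + 1) u"
        using R1[OF RY[OF k1(1) u]] R1[OF RY[OF k1(2) u]] by (simp add: algebra_simps)
      also have "\<dots> = \<phi> (Y k u)"
        unfolding \<phi>_def D_def using c by (simp add: lin_diff[OF lS] algebra_simps)
      finally show ?thesis using 2 by (simp add: sw_def)
    next
      case 3
      have "Y j (D u) = D (Y j u)" unfolding D_def
        using Ycomm[OF j k1(1)] Ycomm[OF j k1(2)] lin_diff[OF linY[OF j]] by simp
      then show ?thesis using 3 YS[OF j k, of "D u"] lin_add[OF linY[OF j]]
        by (simp add: \<phi>_def sw_def)
    qed
  qed
  have AI: "Aop j (swpv k i j) (\<phi> u) = \<phi> (Aop (sw k j) (i (sw k j)) u)" if j: "j \<in> {1..nn}" and u: "u \<in> R" for j u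
    unfolding Aop_def using I[OF j u] by (simp add: lin_diff[OF lph] lin_scl[OF lph] swpv_sw)
  have vR: "v \<in> R" unfolding R_def v0 by simp
  have pw: "(Aop j (swpv k i j) ^^ N) (\<phi> v) = 0" if j: "j \<in> {1..nn}" for j
  proof -
    have "(Aop j (swpv k i j) ^^ N) (\<phi> v) = \<phi> ((Aop (sw k j) (i (sw k j)) ^^ N) v)"
      using iter_inter[of R "Aop j (swpv k i j)" \<phi> "Aop (sw k j) (i (sw k j))" v N] AI[OF j]
        RA[OF sw_range[OF k j]] vR by blast
    also have "\<dots> = 0" using nil sw_range[OF k j] lin_zero[OF lph] by simp
    finally show ?thesis .
  qed
  have "\<phi> v \<in> gen_eig nn scl act Y a (swpv k i)"
    using Rph[OF vR] pw unfolding gen_eig_Aop R_def by blast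
  then have h: "Y k (\<phi> v) - scl (i (k + 1)) (\<phi> v) = 0" using hyp by blast
  define w where "w = Aop (k + 1) (i (k + 1)) v"
  have wR: "w \<in> R" unfolding w_def using RA[OF k1(2) vR] .
  have "swpv k i k = i (k + 1)" by (simp add: swpv_def)
  then have pw0: "\<phi> w = 0" using AI[OF k1(1) vR] h unfolding w_def by (simp add: Aop_def sw_def)
  then have SDw: "S k (D w) = - w" unfolding \<phi>_def by (simp add: eq_neg_iff_add_eq_0)
  have "D w = S k (S k (D w))" using SS[OF RD[OF wR]] by simp
  also have "\<dots> = - S k w" using SDw lin_minus[OF lS] by simp
  finally have DwS: "D w = - S k w" .
  have SD: "S k (D w) = - D (S k w) - w - w"
    unfolding D_def using R1[OF wR] R2[OF wR] by (simp add: lin_diff[OF lS] algebra_simps)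
  have "w = - D (S k w)" using SD SDw by (simp add: algebra_simps)
  then have "D (S k w) = - w" by (metis minus_minus)
  then have DDw: "D (D w) = w" using DwS lin_minus[OF lD] by (simp add: minus_equation_iff)
  define z where "z = w + D w"
  have Dz: "D z = z" unfolding z_def using DDw lin_add[OF lD] by simp
  let ?A = "Aop k (i k)" and ?B = "Aop (k + 1) (i (k + 1))"
  define \<gamma> where "\<gamma> = i k - i (k + 1)"
  have AB: "?A x - ?B x = D x - scl \<gamma> x" for x
    unfolding Aop_def D_def \<gamma>_def by (simp add: scale_left_diff_distrib algebra_simps)
  have lA: "lin ?A" and lB: "lin ?B" using lin_Aop k1 by auto
  have AD: "?A (D x) = D (?A x)" "?B (D x) = D (?B x)" for x
    unfolding D_def using Aop_Y k1 lin_diff[OF lA] lin_diff[OF lB] by auto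
  have AN: "(?A ^^ N) w = 0"
    unfolding w_def using pow_comm[of ?A ?B N v] Aop_comm[OF k1] nil k1 lin_zero[OF lB] by simp
  have BN: "(?B ^^ N) w = 0"
    unfolding w_def using pow_comm[of ?B ?B N v] nil k1 lin_zero[OF lB] by simp
  have ANz: "(?A ^^ N) z = 0"
    unfolding z_def using lin_add[OF lin_pow[OF lA]] pow_comm[of ?A D N w] AD AN lin_zero[OF lD] by simp
  have BNz: "(?B ^^ N) z = 0"
    unfolding z_def using lin_add[OF lin_pow[OF lB]] pow_comm[of ?B D N w] AD BN lin_zero[OF lD] by simp
  have ABc: "\<And>x. ?A (?B x) = ?B (?A x)" using Aop_comm[OF k1] by blast
  have al1: "1 - \<gamma> \<noteq> 0" using ne unfolding \<gamma>_def by (auto simp: algebra_simps)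
  have al2: "- 1 - \<gamma> \<noteq> 0" using ne unfolding \<gamma>_def by (auto simp: algebra_simps)
  have "?A z - ?B z = scl (1 - \<gamma>) z" using AB Dz by (simp add: scale_left_diff_distrib)
  then have "z = 0" by (rule kill_minus[OF lA lB ABc ANz BNz _ al1])
  then have Dw: "D w = - w" unfolding z_def by (simp add: eq_neg_iff_add_eq_0 add.commute)
  have "?A w - ?B w = scl (- 1 - \<gamma>) w" using AB Dw by (simp add: scale_left_diff_distrib)
  then have "w = 0" by (rule kill_minus[OF lA lB ABc AN BN _ al2])
  then show ?thesis unfolding w_def Aop_def .
qed

end

theorem lemma3p4:
  fixes r t :: nat and \<omega> :: "nat \<Rightarrow> complex"
    and scl :: "complex \<Rightarrow> 'v::ab_group_add \<Rightarrow> 'v"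
    and act :: "diag \<Rightarrow> 'v \<Rightarrow> 'v" and Y :: "nat \<Rightarrow> 'v \<Rightarrow> 'v"
    and a :: "bool list" and i :: "nat \<Rightarrow> complex" and k :: nat
  assumes M: "VBr_module r t \<omega> scl act Y"
    and a: "a \<in> Seq r t"
    and k: "k \<in> {1..<r + t}"
    and cases:
      "(ent a k = ent a (k + 1) \<and> i (k + 1) \<notin> {i k, i k + 1, i k - 1} \<and>
          (\<forall>v\<in>gen_eig (r + t) scl act Y a (swpv k i). Y k v - scl (i (k + 1)) v = 0))
       \<or> (ent a k \<noteq> ent a (k + 1) \<and> i k + i (k + 1) \<noteq> 0 \<and>
          (\<forall>v\<in>gen_eig (r + t) scl act Y (swp k a) (swpv k i). Y k v - scl (i (k + 1)) v = 0))"
  shows "\<forall>v\<in>gen_eig (r + t) scl act Y a i. Y (k + 1) v - scl (i (k + 1)) v = 0"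
proof -
  have vs: "vector_space scl" using M[unfolded VBr_module_def Let_def, THEN conjunct1] .
  interpret V: vbr scl r t \<omega> act Y using vs M by (simp add: vbr_def vbr_axioms_def)
  show ?thesis using cases V.casea[OF a k] V.caseb[OF a k] by blast
qed

end
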